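(* Consider the polyhedron $\mathcal{F}$ of all $(y,x)\geq0$ satisfying the production, inventory and capacity constraints described in the context, where $u^{\mathrm{REC}}>0$ and $u^{\mathrm{CP}}>0$. Let $(\tilde{y},\tilde{x})$ be an extreme point of $\mathcal{F}$. Then for all $j\in\mathcal{J},l\in\mathcal{L},z\in\mathcal{Z}$, writing $Y_{z,l,j}=\sum_{n\in\mathcal{N}^{\mathrm{REC}}_l}\tilde{y}^{\mathrm{REC}}_{z,l,j,n}$, $$\#\{n\in\mathcal{N}^{\mathrm{REC}}_l:\tilde{y}^{\mathrm{REC}}_{z,l,j,n}=u^{\mathrm{REC}}\}\geq\Big\lceil\tfrac{Y_{z,l,j}}{u^{\mathrm{REC}}}\Big\rceil-1,\qquad \#\{n\in\mathcal{N}^{\mathrm{REC}}_l:\tilde{y}^{\mathrm{REC}}_{z,l,j,n}=0\}\geq|\mathcal{N}^{\mathrm{REC}}_l|-\Big\lceil\tfrac{Y_{z,l,j}}{u^{\mathrm{REC}}}\Big\rceil,$$ and for all $k\in\mathcal{K}^{\mathrm{CP}},l\in\mathcal{L},z\in\mathcal{Z}$, writing $Y_{z,l,k}=\sum_{n\in\mathcal{N}^{\mathrm{CP}}_{l,k}}\tilde{y}^{\mathrm{CP}}_{z,l,k,n}$, $$\#\{n\in\mathcal{N}^{\mathrm{CP}}_{l,k}:\tilde{y}^{\mathrm{CP}}_{z,l,k,n}=u^{\mathrm{CP}}\}\geq\Big\lceil\tfrac{Y_{z,l,k}}{u^{\mathrm{CP}}}\Big\rceil-1,\qquad \#\{n\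in\mathcal{N}^{\mathrm{CP}}_{l,k}:\tilde{y}^{\mathrm{CP}}_{z,l,k,n}=0\}\geq|\mathcal{N}^{\mathrm{CP}}_{l,k}|-\Big\lceil\tfrac{Y_{z,l,k}}{u^{\mathrm{CP}}}\Big\rceil.$$
   Context: Index sets (all finite): chemistries $\mathcal{I}$; recycling processes $\mathcal{J}$; materials $\mathcal{K}$ with cathode powders $\mathcal{K}^{\mathrm{CP}}\subseteq\mathcal{K}$; zones $\mathcal{Z}$; periods $\mathcal{T}=\{1,\dots,T\}$; planning periods $\mathcal{L}=\{1,\dots,L\}$ with $\{\mathcal{T}_l\}$ a partition of $\mathcal{T}$; stages with $\sigma_t$ the stage of $t\in\mathcal{T}\cup\{0\}$; finite nonempty node sets $\Omega_\sigma$; ancestor maps $a_\omega(t)\in\Omega_{\sigma_t}$ with $a_\omega(t)=\omega$ if $\omega\in\Omega_{\sigma_t}$; positive integers $N^{\mathrm{REC}}_l,N^{\mathrm{CP}}_{l,k}$ with $\mathcal{N}^{\mathrm{REC}}_l=\{1,\dots,N^{\mathrm{REC}}_l\}$, $\mathcal{N}^{\mathrm{CP}}_{l,k}=\{1,\dots,N^{\mathrm{CP}}_{l,k}\}$. Data: coefficients $\Delta^{\mathrm{NB}}_{i,k},\Delta^{\mathrm{CP}}_{k',k},\Delta^{\mathrm{MC}}_{k',k},\Delta^{\mathrm{REC}}_{k,i,j}$, demands $d_{\omega,z,t,i}$, supplies $s_{\omega,z,t,i}$, capacities $u^{\mathrm{REC}},u^{\mathrm{CP}}$. Variables (nonnegative),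 for $t\in\mathcal{T},z\in\mathcal{Z},\omega\in\Omega_{\sigma_t}$ (inventories also at $t=0$): $x^{\mathrm{NM,NB}}_{\omega,z,t,k},x^{\mathrm{RM,INV}}_{\omega,z,t,k},x^{\mathrm{RM,S}}_{\omega,z,t,k},x^{\mathrm{INV}}_{\omega,z,t,k}$ ($k\in\mathcal{K}$); $x^{\mathrm{INV,NB}},x^{\mathrm{CP,INV}}$ ($k\in\mathcal{K}^{\mathrm{CP}}$); $x^{\mathrm{NM,CP}},x^{\mathrm{MC,CP}},x^{\mathrm{INV,MC}}$ ($k\notin\mathcal{K}^{\mathrm{CP}}$); $x^{\mathrm{RB}}_{\omega,z,t,i}$; $x^{\mathrm{RB,RM}}_{\omega,z,t,i,j}$; $x^{\mathrm{TR,RM}}_{\omega,z,z',t,k},x^{\mathrm{TR,RB}}_{\omega,z,z',t,i}$ ($z'\neq z$); $y^{\mathrm{REC}}_{z,l,j,n}$ ($n\in\mathcal{N}^{\mathrm{REC}}_l$), $y^{\mathrm{CP}}_{z,l,k,n}$ ($k\in\mathcal{K}^{\mathrm{CP}},n\in\mathcal{N}^{\mathrm{CP}}_{l,k}$). Production constraints, for all $t\in\mathcal{T},z,\omega\in\Omega_{\sigma_t}$: $\sum_i\Delta^{\mathrm{NB}}_{i,k}d_{\omega,z,t,i}=x^{\mathrm{NM,NB}}_{\omega,z,t,k}+x^{\mathrm{INV,NB}}_{\omega,z,t,k}$ ($k\in\mathcal{K}^{\mathrm{CP}}$); $\sum_i\Delta^{\mathrm{NB}}_{i,k}d_{\omega,z,t,i}=x^{\mathrm{NM,NB}}_{\omega,z,t,k}$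 ($k\notin\mathcal{K}^{\mathrm{CP}}$); $\sum_{k'\in\mathcal{K}^{\mathrm{CP}}}\Delta^{\mathrm{CP}}_{k',k}x^{\mathrm{CP,INV}}_{\omega,z,t,k'}=x^{\mathrm{NM,CP}}_{\omega,z,t,k}+x^{\mathrm{MC,CP}}_{\omega,z,t,k}$ ($k\notin\mathcal{K}^{\mathrm{CP}}$); $\sum_{k'\notin\mathcal{K}^{\mathrm{CP}}}\Delta^{\mathrm{MC}}_{k',k}x^{\mathrm{MC,CP}}_{\omega,z,t,k'}=x^{\mathrm{INV,MC}}_{\omega,z,t,k}$ ($k\notin\mathcal{K}^{\mathrm{CP}}$); $x^{\mathrm{RM,INV}}_{\omega,z,t,k}+x^{\mathrm{RM,S}}_{\omega,z,t,k}=\sum_{i,j}\Delta^{\mathrm{REC}}_{k,i,j}x^{\mathrm{RB,RM}}_{\omega,z,t,i,j}$. Inventory constraints: $x^{\mathrm{RB}}_{\omega,z,0,i}=0$, $x^{\mathrm{INV}}_{\omega,z,0,k}=0$ for $\omega\in\Omega_{\sigma_0}$; for $t\in\mathcal{T}$ and $\omega'=a_\omega(t-1)$: $x^{\mathrm{RB}}_{\omega,z,t,i}=x^{\mathrm{RB}}_{\omega',z,t-1,i}+\sum_{z'\neq z}(x^{\mathrm{TR,RB}}_{\omega,z',z,t,i}-x^{\mathrm{TR,RB}}_{\omega,z,z',t,i})+s_{\omega,z,t,i}-\sum_jx^{\mathrm{RB,RM}}_{\omega,z,t,i,j}$; for $k\notin\mathcal{K}^{\mathrm{CP}}$: $x^{\mathrm{INV}}_{\omega,z,t,k}=x^{\mathrm{INV}}_{\omega',z,t-1,k}+\sum_{z'\neq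 z}(x^{\mathrm{TR,RM}}_{\omega,z',z,t,k}-x^{\mathrm{TR,RM}}_{\omega,z,z',t,k})+x^{\mathrm{RM,INV}}_{\omega,z,t,k}-x^{\mathrm{INV,MC}}_{\omega,z,t,k}$; for $k\in\mathcal{K}^{\mathrm{CP}}$: the same right-hand side but with $-x^{\mathrm{INV,MC}}_{\omega,z,t,k}$ replaced by $+x^{\mathrm{CP,INV}}_{\omega,z,t,k}-x^{\mathrm{INV,NB}}_{\omega,z,t,k}$. Capacity constraints: $\sum_{n\in\mathcal{N}^{\mathrm{REC}}_l}y^{\mathrm{REC}}_{z,l,j,n}\geq\sum_ix^{\mathrm{RB,RM}}_{\omega,z,t,i,j}$ and $\sum_{n\in\mathcal{N}^{\mathrm{CP}}_{l,k}}y^{\mathrm{CP}}_{z,l,k,n}\geq x^{\mathrm{CP,INV}}_{\omega,z,t,k}$ for all $t\in\mathcal{T}_l,\omega\in\Omega_{\sigma_t}$; the total capacities $\sum_ny^{\mathrm{REC}}_{z,l,j,n}$ and $\sum_ny^{\mathrm{CP}}_{z,l,k,n}$ are nondecreasing from $l-1$ to $l$ for $l\geq2$; $y^{\mathrm{REC}}_{z,l,j,n}\leq u^{\mathrm{REC}}$ and $y^{\mathrm{CP}}_{z,l,k,n}\leq u^{\mathrm{CP}}$. *)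

theory Defs
  imports Complex_Main
begin

text \<open>Periods are 1..nT (with 0 for initial inventories), planning periods 1..nL,
  cathode-powder material set cpK is a subset of matK; recycle-capacity module
  indices are 1..nREC l, cathode-powder module indices are 1..nCP l k.\<close>

record ('i,'j,'k,'z,'w,'s) inst =
  chemI :: "'i set"
  procJ :: "'j set"
  matK  :: "'k set"
  cpK   :: "'k set"
  zones :: "'z set"
  nT    :: nat
  nL    :: nat
  Tpart :: "nat \<Rightarrow> nat set"
  stage :: "nat \<Rightarrow> 's"
  Omg   :: "'s \<Rightarrow> 'w set"
  anc   :: "'w \<Rightarrow> nat \<Rightarrow> 'w"
  nREC  :: "nat \<Rightarrow> nat"
  nCP   :: "nat \<Rightarrow> 'k \<Rightarrow> nat"
  dNB   :: "'i \<Rightarrow> 'k \<Rightarrow> real"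
  dCP   :: "'k \<Rightarrow> 'k \<Rightarrow> real"
  dMC   :: "'k \<Rightarrow> 'k \<Rightarrow> real"
  dREC  :: "'k \<Rightarrow> 'i \<Rightarrow> 'j \<Rightarrow> real"
  dem   :: "'w \<Rightarrow> 'z \<Rightarrow> nat \<Rightarrow> 'i \<Rightarrow> real"
  supl  :: "'w \<Rightarrow> 'z \<Rightarrow> nat \<Rightarrow> 'i \<Rightarrow> real"
  uREC  :: real
  uCP   :: real

definition wf_inst :: "('i,'j,'k,'z,'w,'s) inst \<Rightarrow> bool" where
  "wf_inst P \<longleftrightarrow>
     finite (chemI P) \<and> finite (procJ P) \<and> finite (matK P) \<and> finite (zones P) \<and>
     cpK P \<subseteq> matK P \<and>
     (\<forall>l\<in>{1..nL P}. Tpart P l \<noteq> {}) \<and>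
     (\<forall>l\<in>{1..nL P}. \<forall>l'\<in>{1..nL P}. l \<noteq> l' \<longrightarrow> Tpart P l \<inter> Tpart P l' = {}) \<and>
     (\<Union>l\<in>{1..nL P}. Tpart P l) = {1..nT P} \<and>
     (\<forall>t\<in>{0..nT P}. finite (Omg P (stage P t)) \<and> Omg P (stage P t) \<noteq> {}) \<and>
     (\<forall>t\<in>{0..nT P}. \<forall>t'\<in>{t..nT P}. \<forall>\<omega>\<in>Omg P (stage P t').
         anc P \<omega> t \<in> Omg P (stage P t)) \<and>
     (\<forall>t\<in>{0..nT P}. \<forall>\<omega>\<in>Omg P (stage P t). anc P \<omega> t = \<omega>) \<and>
     (\<forall>l\<in>{1..nL P}. nREC P l > 0) \<and>
     (\<forall>l\<in>{1..nL P}. \<forall>k\<in>cpK P. nCP P l k > 0)"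

datatype ('w,'z,'i,'j,'k) var =
    XNMNB 'w 'z nat 'k | XRMINV 'w 'z nat 'k | XRMS 'w 'z nat 'k | XINV 'w 'z nat 'k
  | XINVNB 'w 'z nat 'k | XCPINV 'w 'z nat 'k
  | XNMCP 'w 'z nat 'k | XMCCP 'w 'z nat 'k | XINVMC 'w 'z nat 'k
  | XRB 'w 'z nat 'i | XRBRM 'w 'z nat 'i 'j
  | XTRRM 'w 'z 'z nat 'k | XTRRB 'w 'z 'z nat 'i
  | YREC 'z nat 'j nat | YCP 'z nat 'k nat

fun in_dom :: "('i,'j,'k,'z,'w,'s) inst \<Rightarrow> ('w,'z,'i,'j,'k) var \<Rightarrow> bool" where
  "in_dom P (XNMNB \<omega> z t k) = (t \<in> {1..nT P} \<and> z \<in> zones P \<and> \<omega> \<in> Omg P (stage P t) \<and> k \<in> matK P)"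
| "in_dom P (XRMINV \<omega> z t k) = (t \<in> {1..nT P} \<and> z \<in> zones P \<and> \<omega> \<in> Omg P (stage P t) \<and> k \<in> matK P)"
| "in_dom P (XRMS \<omega> z t k) = (t \<in> {1..nT P} \<and> z \<in> zones P \<and> \<omega> \<in> Omg P (stage P t) \<and> k \<in> matK P)"
| "in_dom P (XINV \<omega> z t k) = (t \<in> {0..nT P} \<and> z \<in> zones P \<and> \<omega> \<in> Omg P (stage P t) \<and> k \<in> matK P)"
| "in_dom P (XINVNB \<omega> z t k) = (t \<in> {1..nT P} \<and> z \<in> zones P \<and> \<omega> \<in> Omg P (stage P t) \<and> k \<in> cpK P)"
| "in_dom P (XCPINV \<omega> z t k) = (t \<in> {1..nT P} \<and> z \<in> zones P \<and> \<omega> \<in> Omg P (stage P t) \<and> k \<in> cpK P)"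
| "in_dom P (XNMCP \<omega> z t k) = (t \<in> {1..nT P} \<and> z \<in> zones P \<and> \<omega> \<in> Omg P (stage P t) \<and> k \<in> matK P - cpK P)"
| "in_dom P (XMCCP \<omega> z t k) = (t \<in> {1..nT P} \<and> z \<in> zones P \<and> \<omega> \<in> Omg P (stage P t) \<and> k \<in> matK P - cpK P)"
| "in_dom P (XINVMC \<omega> z t k) = (t \<in> {1..nT P} \<and> z \<in> zones P \<and> \<omega> \<in> Omg P (stage P t) \<and> k \<in> matK P - cpK P)"
| "in_dom P (XRB \<omega> z t i) = (t \<in> {0..nT P} \<and> z \<in> zones P \<and> \<omega> \<in> Omg P (stage P t) \<and> i \<in> chemI P)"
| "in_dom P (XRBRM \<omega> z t i j) = (t \<in> {1..nT P} \<and> z \<in> zones P \<and> \<omega> \<in> Omg P (stage P t) \<and> i \<in> chemI P \<and> j \<in> procJ P)"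
| "in_dom P (XTRRM \<omega> z z' t k) = (t \<in> {1..nT P} \<and> z \<in> zones P \<and> z' \<in> zones P \<and> z' \<noteq> z \<and> \<omega> \<in> Omg P (stage P t) \<and> k \<in> matK P)"
| "in_dom P (XTRRB \<omega> z z' t i) = (t \<in> {1..nT P} \<and> z \<in> zones P \<and> z' \<in> zones P \<and> z' \<noteq> z \<and> \<omega> \<in> Omg P (stage P t) \<and> i \<in> chemI P)"
| "in_dom P (YREC z l j n) = (z \<in> zones P \<and> l \<in> {1..nL P} \<and> j \<in> procJ P \<and> n \<in> {1..nREC P l})"
| "in_dom P (YCP z l k n) = (z \<in> zones P \<and> l \<in> {1..nL P} \<and> k \<in> cpK P \<and> n \<in> {1..nCP P l k})"

definition capREC :: "('i,'j,'k,'z,'w,'s) inst \<Rightarrow> (('w,'z,'i,'j,'k) var \<Rightarrow> real) \<Rightarrow> 'z \<Rightarrow> nat \<Rightarrow> 'j \<Rightarrow> real" where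
  "capREC P p z l j = (\<Sum>n\<in>{1..nREC P l}. p (YREC z l j n))"

definition capCP :: "('i,'j,'k,'z,'w,'s) inst \<Rightarrow> (('w,'z,'i,'j,'k) var \<Rightarrow> real) \<Rightarrow> 'z \<Rightarrow> nat \<Rightarrow> 'k \<Rightarrow> real" where
  "capCP P p z l k = (\<Sum>n\<in>{1..nCP P l k}. p (YCP z l k n))"

definition production_constraints :: "('i,'j,'k,'z,'w,'s) inst \<Rightarrow> (('w,'z,'i,'j,'k) var \<Rightarrow> real) \<Rightarrow> bool" where
  "production_constraints P p \<longleftrightarrow>
    (\<forall>t\<in>{1..nT P}. \<forall>z\<in>zones P. \<forall>\<omega>\<in>Omg P (stage P t).
      (\<forall>k\<in>cpK P. (\<Sum>i\<in>chemI P. dNB P i k * dem P \<omega> z t i)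
                   = p (XNMNB \<omega> z t k) + p (XINVNB \<omega> z t k)) \<and>
      (\<forall>k\<in>matK P - cpK P. (\<Sum>i\<in>chemI P. dNB P i k * dem P \<omega> z t i) = p (XNMNB \<omega> z t k)) \<and>
      (\<forall>k\<in>matK P - cpK P. (\<Sum>k'\<in>cpK P. dCP P k' k * p (XCPINV \<omega> z t k'))
                   = p (XNMCP \<omega> z t k) + p (XMCCP \<omega> z t k)) \<and>
      (\<forall>k\<in>matK P - cpK P. (\<Sum>k'\<in>matK P - cpK P. dMC P k' k * p (XMCCP \<omega> z t k'))
                   = p (XINVMC \<omega> z t k)) \<and>
      (\<forall>k\<in>matK P. p (XRMINV \<omega> z t k) + p (XRMS \<omega> z t k)
                   = (\<Sum>i\<in>chemI P. \<Sum>j\<in>procJ P. dREC P k i j * p (XRBRM \<omega> z t i j))))"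

definition inventory_constraints :: "('i,'j,'k,'z,'w,'s) inst \<Rightarrow> (('w,'z,'i,'j,'k) var \<Rightarrow> real) \<Rightarrow> bool" where
  "inventory_constraints P p \<longleftrightarrow>
    (\<forall>z\<in>zones P. \<forall>\<omega>\<in>Omg P (stage P 0).
       (\<forall>i\<in>chemI P. p (XRB \<omega> z 0 i) = 0) \<and> (\<forall>k\<in>matK P. p (XINV \<omega> z 0 k) = 0)) \<and>
    (\<forall>t\<in>{1..nT P}. \<forall>z\<in>zones P. \<forall>\<omega>\<in>Omg P (stage P t).
      (\<forall>i\<in>chemI P. p (XRB \<omega> z t i) =
          p (XRB (anc P \<omega> (t - 1)) z (t - 1) i)
          + (\<Sum>z'\<in>zones P - {z}. p (XTRRB \<omega> z' z t i) - p (XTRRB \<omega> z z' t i))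
          + supl P \<omega> z t i - (\<Sum>j\<in>procJ P. p (XRBRM \<omega> z t i j))) \<and>
      (\<forall>k\<in>matK P - cpK P. p (XINV \<omega> z t k) =
          p (XINV (anc P \<omega> (t - 1)) z (t - 1) k)
          + (\<Sum>z'\<in>zones P - {z}. p (XTRRM \<omega> z' z t k) - p (XTRRM \<omega> z z' t k))
          + p (XRMINV \<omega> z t k) - p (XINVMC \<omega> z t k)) \<and>
      (\<forall>k\<in>cpK P. p (XINV \<omega> z t k) =
          p (XINV (anc P \<omega> (t - 1)) z (t - 1) k)
          + (\<Sum>z'\<in>zones P - {z}. p (XTRRM \<omega> z' z t k) - p (XTRRM \<omega> z z' t k))
          + p (XRMINV \<omega> z t k) + p (XCPINV \<omega> z t k) - p (XINVNB \<omega> z t k)))"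

definition capacity_constraints :: "('i,'j,'k,'z,'w,'s) inst \<Rightarrow> (('w,'z,'i,'j,'k) var \<Rightarrow> real) \<Rightarrow> bool" where
  "capacity_constraints P p \<longleftrightarrow>
    (\<forall>z\<in>zones P. \<forall>l\<in>{1..nL P}. \<forall>t\<in>Tpart P l. \<forall>\<omega>\<in>Omg P (stage P t).
       (\<forall>j\<in>procJ P. capREC P p z l j \<ge> (\<Sum>i\<in>chemI P. p (XRBRM \<omega> z t i j))) \<and>
       (\<forall>k\<in>cpK P. capCP P p z l k \<ge> p (XCPINV \<omega> z t k))) \<and>
    (\<forall>z\<in>zones P. \<forall>l\<in>{2..nL P}.
       (\<forall>j\<in>procJ P. capREC P p z (l - 1) j \<le> capREC P p z l j) \<and>
       (\<forall>k\<in>cpK P. capCP P p z (l - 1) k \<le> capCP P p z l k)) \<and>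
    (\<forall>z\<in>zones P. \<forall>l\<in>{1..nL P}.
       (\<forall>j\<in>procJ P. \<forall>n\<in>{1..nREC P l}. p (YREC z l j n) \<le> uREC P) \<and>
       (\<forall>k\<in>cpK P. \<forall>n\<in>{1..nCP P l k}. p (YCP z l k n) \<le> uCP P))"

text \<open>The polyhedron F: points are functions on the variable type which vanish
  outside the index domain (so F lives in the finite-dimensional space of genuine variables).\<close>

definition feasible_set :: "('i,'j,'k,'z,'w,'s) inst \<Rightarrow> (('w,'z,'i,'j,'k) var \<Rightarrow> real) set" where
  "feasible_set P = {p. (\<forall>v. \<not> in_dom P v \<longrightarrow> p v = 0) \<and> (\<forall>v. p v \<ge> 0) \<and>
       production_constraints P p \<and> inventory_constraints P p \<and> capacity_constraints P p}"

definition extreme_point :: "('v \<Rightarrow> real) set \<Rightarrow> ('v \<Rightarrow> real) \<Rightarrow> bool" where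
  "extreme_point S p \<longleftrightarrow> p \<in> S \<and>
     (\<forall>p1\<in>S. \<forall>p2\<in>S. \<forall>\<theta>::real. 0 < \<theta> \<and> \<theta> < 1 \<and> p = (\<lambda>v. \<theta> * p1 v + (1 - \<theta>) * p2 v) \<longrightarrow> p1 = p2)"

end

theory Submission
  imports Defs
begin

lemma count_lemma:
  fixes S :: "nat set" and y :: "nat \<Rightarrow> real" and u :: real
  assumes fin: "finite S" and u: "u > 0"
    and bnd: "\<forall>n\<in>S. 0 \<le> y n \<and> y n \<le> u"
    and one: "\<forall>a\<in>S. \<forall>b\<in>S. 0 < y a \<and> y a < u \<and> 0 < y b \<and> y b < u \<longrightarrow> a = b"
  shows "int (card {n\<in>S. y n = u}) \<ge> \<lceil>(\<Sum>n\<in>S. y n) / u\<rceil> - 1 \<and>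
         int (card {n\<in>S. y n = 0}) \<ge> int (card S) - \<lceil>(\<Sum>n\<in>S. y n) / u\<rceil>"
proof -
  define A where "A = {n\<in>S. y n = u}"
  define B where "B = {n\<in>S. y n = 0}"
  define F where "F = {n\<in>S. 0 < y n \<and> y n < u}"
  have SU: "S = A \<union> B \<union> F" using bnd u unfolding A_def B_def F_def by force
  have fA: "finite A" "finite B" "finite F" using fin unfolding A_def B_def F_def by auto
  have d1: "A \<inter> B = {}" "(A \<union> B) \<inter> F = {}" using u unfolding A_def B_def F_def by auto
  have cS: "card S = card A + card B + card F"
    using SU fA d1 by (simp add: card_Un_disjoint)
  have sS: "(\<Sum>n\<in>S. y n) = (\<Sum>n\<in>A. y n) + (\<Sum>n\<in>B. y n) + (\<Sum>n\<in>F. y n)"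
    using SU fA d1 by (simp add: sum.union_disjoint)
  have sA: "(\<Sum>n\<in>A. y n) = real (card A) * u" unfolding A_def by simp
  have sB: "(\<Sum>n\<in>B. y n) = 0" unfolding B_def by simp
  show ?thesis
  proof (cases "F = {}")
    case True
    then have "(\<Sum>n\<in>S. y n) / u = real (card A)" using sS sA sB u by simp
    then show ?thesis using cS True by (simp add: A_def B_def)
  next
    case False
    then obtain m where m: "m \<in> F" by blast
    have Fm: "F = {m}" using m one unfolding F_def by auto
    have ym: "0 < y m" "y m < u" using m unfolding F_def by auto
    have eq: "(\<Sum>n\<in>S. y n) / u = real (card A) + y m / u"
      using sS sA sB Fm u by (simp add: field_simps)
    have "0 < y m / u" "y m / u < 1" using ym u by auto
    then have "\<lceil>(\<Sum>n\<in>S. y n) / u\<rceil> = int (card A) + 1"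
      unfolding eq by (subst ceiling_eq_iff) auto
    then show ?thesis using cS Fm by (simp add: A_def B_def)
  qed
qed

lemma feasible_transfer:
  assumes pF: "p \<in> feasible_set P"
    and agree: "\<And>v. (case v of YREC _ _ _ _ \<Rightarrow> False | YCP _ _ _ _ \<Rightarrow> False | _ \<Rightarrow> True) \<Longrightarrow> q v = p v"
    and cR: "capREC P q = capREC P p" and cC: "capCP P q = capCP P p"
    and dom: "\<forall>v. \<not> in_dom P v \<longrightarrow> q v = 0" and nn: "\<forall>v. q v \<ge> 0"
    and bR: "\<forall>z\<in>zones P. \<forall>l\<in>{1..nL P}. \<forall>j\<in>procJ P. \<forall>n\<in>{1..nREC P l}. q (YREC z l j n) \<le> uREC P"
    and bC: "\<forall>z\<in>zones P. \<forall>l\<in>{1..nL P}. \<forall>k\<in>cpK P. \<forall>n\<in>{1..nCP P l k}. q (YCP z l k n) \<le> uCP P"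
  shows "q \<in> feasible_set P"
proof -
  have e: "\<And>a b c d. q (XNMNB a b c d) = p (XNMNB a b c d)"
    "\<And>a b c d. q (XRMINV a b c d) = p (XRMINV a b c d)"
    "\<And>a b c d. q (XRMS a b c d) = p (XRMS a b c d)"
    "\<And>a b c d. q (XINV a b c d) = p (XINV a b c d)"
    "\<And>a b c d. q (XINVNB a b c d) = p (XINVNB a b c d)"
    "\<And>a b c d. q (XCPINV a b c d) = p (XCPINV a b c d)"
    "\<And>a b c d. q (XNMCP a b c d) = p (XNMCP a b c d)"
    "\<And>a b c d. q (XMCCP a b c d) = p (XMCCP a b c d)"
    "\<And>a b c d. q (XINVMC a b c d) = p (XINVMC a b c d)"
    "\<And>a b c d. q (XRB a b c d) = p (XRB a b c d)"
    "\<And>a b c d f. q (XRBRM a b c d f) = p (XRBRM a b c d f)"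
    "\<And>a b c d f. q (XTRRM a b c d f) = p (XTRRM a b c d f)"
    "\<And>a b c d f. q (XTRRB a b c d f) = p (XTRRB a b c d f)"
    by (rule agree; simp)+
  have pc: "production_constraints P p" "inventory_constraints P p" "capacity_constraints P p"
    using pF unfolding feasible_set_def by auto
  have "production_constraints P q" using pc(1) unfolding production_constraints_def e .
  moreover have "inventory_constraints P q" using pc(2) unfolding inventory_constraints_def e .
  moreover have "capacity_constraints P q" using pc(3) bR bC
    unfolding capacity_constraints_def e cR cC by auto
  ultimately show ?thesis using dom nn unfolding feasible_set_def by blast
qed


lemma perturb_REC:
  assumes pF: "p \<in> feasible_set P"
    and z: "z \<in> zones P" and l: "l \<in> {1..nL P}" and j: "j \<in> procJ P"
    and n: "n1 \<in> {1..nREC P l}" "n2 \<in> {1..nREC P l}" "n1 \<noteq> n2"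
    and b: "0 \<le> p (YREC z l j n1) + d" "p (YREC z l j n1) + d \<le> uREC P"
           "0 \<le> p (YREC z l j n2) - d" "p (YREC z l j n2) - d \<le> uREC P"
  shows "(\<lambda>v. p v + d * (if v = YREC z l j n1 then 1 else 0) - d * (if v = YREC z l j n2 then 1 else 0))
         \<in> feasible_set P" (is "?q \<in> _")
proof (rule feasible_transfer[OF pF])
  have pp: "\<forall>v. \<not> in_dom P v \<longrightarrow> p v = 0" "\<forall>v. p v \<ge> 0" "capacity_constraints P p"
    using pF unfolding feasible_set_def by auto
  have ub: "\<forall>z\<in>zones P. \<forall>l\<in>{1..nL P}. \<forall>j\<in>procJ P. \<forall>n\<in>{1..nREC P l}. p (YREC z l j n) \<le> uREC P"
    "\<forall>z\<in>zones P. \<forall>l\<in>{1..nL P}. \<forall>k\<in>cpK P. \<forall>n\<in>{1..nCP P l k}. p (YCP z l k n) \<le> uCP P"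
    using pp(3) unfolding capacity_constraints_def by auto
  show "?q v = p v" if "case v of YREC _ _ _ _ \<Rightarrow> False | YCP _ _ _ _ \<Rightarrow> False | _ \<Rightarrow> True" for v
    using that by (cases v) auto
  have sd: "(\<Sum>x\<in>{1..nREC P l'}. if YREC z' l' j' x = YREC z l j m then (1::real) else 0)
      = (if z' = z \<and> l' = l \<and> j' = j then 1 else 0)" if "m \<in> {1..nREC P l}" for z' l' j' m
    using that by (cases "z' = z \<and> l' = l \<and> j' = j") auto
  show "capREC P ?q = capREC P p"
  proof (intro ext)
    fix z' l' j'
    show "capREC P ?q z' l' j' = capREC P p z' l' j'"
      unfolding capREC_def sum_subtractf sum.distrib sum_distrib_left[symmetric]
      using sd[OF n(1), of z' l' j'] sd[OF n(2), of z' l' j'] by simp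
  qed
  show "capCP P ?q = capCP P p" by (intro ext) (simp add: capCP_def)
  have dn: "in_dom P (YREC z l j n1)" "in_dom P (YREC z l j n2)" using z l j n by auto
  show "\<forall>v. \<not> in_dom P v \<longrightarrow> ?q v = 0" using pp(1) dn by auto
  show "\<forall>v. ?q v \<ge> 0" using pp(2) b n(3) by auto
  show "\<forall>z\<in>zones P. \<forall>l\<in>{1..nL P}. \<forall>j\<in>procJ P. \<forall>n\<in>{1..nREC P l}. ?q (YREC z l j n) \<le> uREC P"
    using ub(1) b n(3) by auto
  show "\<forall>z\<in>zones P. \<forall>l\<in>{1..nL P}. \<forall>k\<in>cpK P. \<forall>n\<in>{1..nCP P l k}. ?q (YCP z l k n) \<le> uCP P"
    using ub(2) by auto
qed


lemma perturb_CP: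
  assumes pF: "p \<in> feasible_set P"
    and z: "z \<in> zones P" and l: "l \<in> {1..nL P}" and k: "k \<in> cpK P"
    and n: "n1 \<in> {1..nCP P l k}" "n2 \<in> {1..nCP P l k}" "n1 \<noteq> n2"
    and b: "0 \<le> p (YCP z l k n1) + d" "p (YCP z l k n1) + d \<le> uCP P"
           "0 \<le> p (YCP z l k n2) - d" "p (YCP z l k n2) - d \<le> uCP P"
  shows "(\<lambda>v. p v + d * (if v = YCP z l k n1 then 1 else 0) - d * (if v = YCP z l k n2 then 1 else 0))
         \<in> feasible_set P" (is "?q \<in> _")
proof (rule feasible_transfer[OF pF])
  have pp: "\<forall>v. \<not> in_dom P v \<longrightarrow> p v = 0" "\<forall>v. p v \<ge> 0" "capacity_constraints P p"
    using pF unfolding feasible_set_def by auto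
  have ub: "\<forall>z\<in>zones P. \<forall>l\<in>{1..nL P}. \<forall>j\<in>procJ P. \<forall>n\<in>{1..nREC P l}. p (YREC z l j n) \<le> uREC P"
    "\<forall>z\<in>zones P. \<forall>l\<in>{1..nL P}. \<forall>k\<in>cpK P. \<forall>n\<in>{1..nCP P l k}. p (YCP z l k n) \<le> uCP P"
    using pp(3) unfolding capacity_constraints_def by auto
  show "?q v = p v" if "case v of YREC _ _ _ _ \<Rightarrow> False | YCP _ _ _ _ \<Rightarrow> False | _ \<Rightarrow> True" for v
    using that by (cases v) auto
  have sd: "(\<Sum>x\<in>{1..nCP P l' k'}. if YCP z' l' k' x = YCP z l k m then (1::real) else 0)
      = (if z' = z \<and> l' = l \<and> k' = k then 1 else 0)" if "m \<in> {1..nCP P l k}" for z' l' k' m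
    using that by (cases "z' = z \<and> l' = l \<and> k' = k") auto
  show "capCP P ?q = capCP P p"
  proof (intro ext)
    fix z' l' k'
    show "capCP P ?q z' l' k' = capCP P p z' l' k'"
      unfolding capCP_def sum_subtractf sum.distrib sum_distrib_left[symmetric]
      using sd[OF n(1), of z' l' k'] sd[OF n(2), of z' l' k'] by simp
  qed
  show "capREC P ?q = capREC P p" by (intro ext) (simp add: capREC_def)
  have dn: "in_dom P (YCP z l k n1)" "in_dom P (YCP z l k n2)" using z l k n by auto
  show "\<forall>v. \<not> in_dom P v \<longrightarrow> ?q v = 0" using pp(1) dn by auto
  show "\<forall>v. ?q v \<ge> 0" using pp(2) b n(3) by auto
  show "\<forall>z\<in>zones P. \<forall>l\<in>{1..nL P}. \<forall>k\<in>cpK P. \<forall>n\<in>{1..nCP P l k}. ?q (YCP z l k n) \<le> uCP P"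
    using ub(2) b n(3) by auto
  show "\<forall>z\<in>zones P. \<forall>l\<in>{1..nL P}. \<forall>j\<in>procJ P. \<forall>n\<in>{1..nREC P l}. ?q (YREC z l j n) \<le> uREC P"
    using ub(1) by auto
qed

lemma extreme_split:
  assumes exs: "extreme_point S p"
    and in1: "(\<lambda>v. p v + e * f v - e * g v) \<in> S"
    and in2: "(\<lambda>v. p v + (- e) * f v - (- e) * g v) \<in> S"
    and ne: "f w - g w \<noteq> 0" and e: "e \<noteq> 0"
  shows False
proof -
  have "p = (\<lambda>v. (1/2) * (p v + e * f v - e * g v) + (1 - 1/2) * (p v + (- e) * f v - (- e) * g v))"
    by (rule ext) (simp add: algebra_simps)
  then have "(\<lambda>v. p v + e * f v - e * g v) = (\<lambda>v. p v + (- e) * f v - (- e) * g v)"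
  proof -
    have "\<forall>p1\<in>S. \<forall>p2\<in>S. \<forall>\<theta>::real. 0 < \<theta> \<and> \<theta> < 1 \<and> p = (\<lambda>v. \<theta> * p1 v + (1 - \<theta>) * p2 v) \<longrightarrow> p1 = p2"
      using exs unfolding extreme_point_def by blast
    from this[rule_format, OF in1 in2, of "1/2"] show ?thesis using \<open>p = _\<close> by simp
  qed
  then have "p w + e * f w - e * g w = p w + (- e) * f w - (- e) * g w" by metis
  then have "e * (f w - g w) = 0" by (simp add: algebra_simps)
  then show False using ne e by simp
qed

lemma REC_one:
  assumes exs: "extreme_point (feasible_set P) p"
    and z: "z \<in> zones P" and l: "l \<in> {1..nL P}" and j: "j \<in> procJ P"
    and a: "a \<in> {1..nREC P l}" and b: "b \<in> {1..nREC P l}"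
    and fa: "0 < p (YREC z l j a)" "p (YREC z l j a) < uREC P"
    and fb: "0 < p (YREC z l j b)" "p (YREC z l j b) < uREC P"
  shows "a = b"
proof (rule ccontr)
  assume nab: "a \<noteq> b"
  have pF: "p \<in> feasible_set P" using exs unfolding extreme_point_def by auto
  define e where "e = min (min (p (YREC z l j a)) (uREC P - p (YREC z l j a)))
                          (min (p (YREC z l j b)) (uREC P - p (YREC z l j b)))"
  have e0: "e > 0" using fa fb unfolding e_def by auto
  have ee: "e \<le> p (YREC z l j a)" "e \<le> uREC P - p (YREC z l j a)"
     "e \<le> p (YREC z l j b)" "e \<le> uREC P - p (YREC z l j b)" unfolding e_def by auto
  note i1 = perturb_REC[OF pF z l j a b nab, of e]
  note i2 = perturb_REC[OF pF z l j a b nab, of "-e"]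
  show False
    apply (rule extreme_split[OF exs, of e "\<lambda>v. if v = YREC z l j a then 1 else 0"
          "\<lambda>v. if v = YREC z l j b then 1 else 0" "YREC z l j a"])
    using i1 i2 ee e0 nab by auto
qed

lemma CP_one:
  assumes exs: "extreme_point (feasible_set P) p"
    and z: "z \<in> zones P" and l: "l \<in> {1..nL P}" and k: "k \<in> cpK P"
    and a: "a \<in> {1..nCP P l k}" and b: "b \<in> {1..nCP P l k}"
    and fa: "0 < p (YCP z l k a)" "p (YCP z l k a) < uCP P"
    and fb: "0 < p (YCP z l k b)" "p (YCP z l k b) < uCP P"
  shows "a = b"
proof (rule ccontr)
  assume nab: "a \<noteq> b"
  have pF: "p \<in> feasible_set P" using exs unfolding extreme_point_def by auto
  define e where "e = min (min (p (YCP z l k a)) (uCP P - p (YCP z l k a)))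
                          (min (p (YCP z l k b)) (uCP P - p (YCP z l k b)))"
  have e0: "e > 0" using fa fb unfolding e_def by auto
  have ee: "e \<le> p (YCP z l k a)" "e \<le> uCP P - p (YCP z l k a)"
     "e \<le> p (YCP z l k b)" "e \<le> uCP P - p (YCP z l k b)" unfolding e_def by auto
  note i1 = perturb_CP[OF pF z l k a b nab, of e]
  note i2 = perturb_CP[OF pF z l k a b nab, of "-e"]
  show False
    apply (rule extreme_split[OF exs, of e "\<lambda>v. if v = YCP z l k a then 1 else 0"
          "\<lambda>v. if v = YCP z l k b then 1 else 0" "YCP z l k a"])
    using i1 i2 ee e0 nab by auto
qed

theorem theorem1:
  fixes P :: "('i,'j,'k,'z,'w,'s) inst"
    and p :: "('w,'z,'i,'j,'k) var \<Rightarrow> real"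
  assumes "wf_inst P"
    and "uREC P > 0" and "uCP P > 0"
    and "extreme_point (feasible_set P) p"
  shows "(\<forall>j\<in>procJ P. \<forall>l\<in>{1..nL P}. \<forall>z\<in>zones P.
            int (card {n\<in>{1..nREC P l}. p (YREC z l j n) = uREC P})
              \<ge> \<lceil>capREC P p z l j / uREC P\<rceil> - 1 \<and>
            int (card {n\<in>{1..nREC P l}. p (YREC z l j n) = 0})
              \<ge> int (nREC P l) - \<lceil>capREC P p z l j / uREC P\<rceil>) \<and>
         (\<forall>k\<in>cpK P. \<forall>l\<in>{1..nL P}. \<forall>z\<in>zones P.
            int (card {n\<in>{1..nCP P l k}. p (YCP z l k n) = uCP P})
              \<ge> \<lceil>capCP P p z l k / uCP P\<rceil> - 1 \<and>
            int (card {n\<in>{1..nCP P l k}. p (YCP z l k n) = 0})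
              \<ge> int (nCP P l k) - \<lceil>capCP P p z l k / uCP P\<rceil>)"
proof -
  have pF: "p \<in> feasible_set P" using assms(4) unfolding extreme_point_def by auto
  have nn: "\<forall>v. p v \<ge> 0" and cc: "capacity_constraints P p"
    using pF unfolding feasible_set_def by auto
  have ub: "\<forall>z\<in>zones P. \<forall>l\<in>{1..nL P}. \<forall>j\<in>procJ P. \<forall>n\<in>{1..nREC P l}. p (YREC z l j n) \<le> uREC P"
    "\<forall>z\<in>zones P. \<forall>l\<in>{1..nL P}. \<forall>k\<in>cpK P. \<forall>n\<in>{1..nCP P l k}. p (YCP z l k n) \<le> uCP P"
    using cc unfolding capacity_constraints_def by auto
  show ?thesis
  proof (intro conjI ballI)
    fix j l z assume j: "j \<in> procJ P" and l: "l \<in> {1..nL P}" and z: "z \<in> zones P"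
    have "int (card {n\<in>{1..nREC P l}. p (YREC z l j n) = uREC P})
              \<ge> \<lceil>(\<Sum>n\<in>{1..nREC P l}. p (YREC z l j n)) / uREC P\<rceil> - 1 \<and>
          int (card {n\<in>{1..nREC P l}. p (YREC z l j n) = 0})
              \<ge> int (card {1..nREC P l}) - \<lceil>(\<Sum>n\<in>{1..nREC P l}. p (YREC z l j n)) / uREC P\<rceil>"
      apply (rule count_lemma[OF _ assms(2)])
      using nn ub(1) j l z REC_one[OF assms(4) z l j] by auto
    then show "int (card {n\<in>{1..nREC P l}. p (YREC z l j n) = uREC P})
              \<ge> \<lceil>capREC P p z l j / uREC P\<rceil> - 1"
       "int (card {n\<in>{1..nREC P l}. p (YREC z l j n) = 0})
              \<ge> int (nREC P l) - \<lceil>capREC P p z l j / uREC P\<rceil>"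
      unfolding capREC_def by auto
  next
    fix k l z assume k: "k \<in> cpK P" and l: "l \<in> {1..nL P}" and z: "z \<in> zones P"
    have "int (card {n\<in>{1..nCP P l k}. p (YCP z l k n) = uCP P})
              \<ge> \<lceil>(\<Sum>n\<in>{1..nCP P l k}. p (YCP z l k n)) / uCP P\<rceil> - 1 \<and>
          int (card {n\<in>{1..nCP P l k}. p (YCP z l k n) = 0})
              \<ge> int (card {1..nCP P l k}) - \<lceil>(\<Sum>n\<in>{1..nCP P l k}. p (YCP z l k n)) / uCP P\<rceil>"
      apply (rule count_lemma[OF _ assms(3)])
      using nn ub(2) k l z CP_one[OF assms(4) z l k] by auto
    then show "int (card {n\<in>{1..nCP P l k}. p (YCP z l k n) = uCP P})
              \<ge> \<lceil>capCP P p z l k / uCP P\<rceil> - 1"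
       "int (card {n\<in>{1..nCP P l k}. p (YCP z l k n) = 0})
              \<ge> int (nCP P l k) - \<lceil>capCP P p z l k / uCP P\<rceil>"
      unfolding capCP_def by auto
  qed
qed

end
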